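(* Fix an integer $m\ge 2$. For $n\ge m$, let $\widehat{\bm Q}\in\mathbb{R}^{n\times(m-1)}$ be a random matrix uniformly (Haar) distributed on the set of $n\times(m-1)$ matrices with orthonormal columns all orthogonal to $\bm\xi_n$, let $\bm Q=[\widehat{\bm Q}\ \ \bm\xi_n]^T\in\mathbb{R}^{m\times n}$, and let \[ \bm W=[W_{ij}]=\bm L\bm Q+\frac{1}{\sqrt{mn}}\bm J_{m\times n}, \] where $\bm L\in\mathbb{R}^{m\times m}$ is given by $L_{ii}=\sqrt{\frac{m-i}{m-i+1}}$ for $i<m$, $L_{ij}=-\frac{1}{\sqrt{(m-j+1)(m-j)}}$ for $1\le j<i\le m$, and $L_{ij}=0$ otherwise. Then for every $C>2$, \[ \mathbb{P}\left(\max_{1\le i\le m,\,1\le j\le n}|W_{ij}|\ge C\sqrt{\frac{\log n}{n}}+\frac{1}{\sqrt{mn}}\right)\to 0\quad\text{as } n\to\infty. \]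
   Context: $\bm 1_k$ denotes the all-ones vector in $\mathbb{R}^k$, $\bm\xi_k=\frac{1}{\sqrt k}\bm 1_k$, and $\bm J_{m\times n}$ is the $m\times n$ all-ones matrix. $\bm L$ is the Cholesky factor of $\bm I_m-\frac1m\bm J_m$. *)

theory Defs
  imports "HOL-Probability.Probability"
begin

text \<open>All matrices are represented as functions on index pairs, with 1-based indices.
  A random n x k matrix takes values in PiM ({1..n} x {1..k}) (\<lambda>_. borel).\<close>

definition mat_space :: "nat \<Rightarrow> nat \<Rightarrow> (nat \<times> nat \<Rightarrow> real) measure" where
  "mat_space n k = PiM ({1..n} \<times> {1..k}) (\<lambda>_. borel)"

definition stiefel_perp :: "nat \<Rightarrow> nat \<Rightarrow> (nat \<times> nat \<Rightarrow> real) set" where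
  "stiefel_perp n k = {Q \<in> PiE ({1..n} \<times> {1..k}) (\<lambda>_. UNIV).
     (\<forall>j\<in>{1..k}. \<forall>l\<in>{1..k}. (\<Sum>i=1..n. Q (i,j) * Q (i,l)) = (if j = l then 1 else 0)) \<and>
     (\<forall>j\<in>{1..k}. (\<Sum>i=1..n. Q (i,j) / sqrt (real n)) = 0)}"

definition orth_fix_xi :: "nat \<Rightarrow> (nat \<times> nat \<Rightarrow> real) set" where
  "orth_fix_xi n = {U. (\<forall>i\<in>{1..n}. \<forall>j\<in>{1..n}.
        (\<Sum>k=1..n. U (k,i) * U (k,j)) = (if i = j then 1 else 0)) \<and>
     (\<forall>i\<in>{1..n}. (\<Sum>j=1..n. U (i,j) * (1 / sqrt (real n))) = 1 / sqrt (real n))}"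

definition lmul :: "nat \<Rightarrow> nat \<Rightarrow> (nat \<times> nat \<Rightarrow> real) \<Rightarrow> (nat \<times> nat \<Rightarrow> real) \<Rightarrow> (nat \<times> nat \<Rightarrow> real)" where
  "lmul n k U Q = restrict (\<lambda>(i,j). \<Sum>l=1..n. U (i,l) * Q (l,j)) ({1..n} \<times> {1..k})"

text \<open>X is Haar (uniformly) distributed on stiefel_perp n k: it is supported on that set and its
  law is invariant under every orthogonal transformation fixing xi_n (the unique such law).\<close>
definition haar_stiefel_perp :: "'a measure \<Rightarrow> nat \<Rightarrow> nat \<Rightarrow> ('a \<Rightarrow> nat \<times> nat \<Rightarrow> real) \<Rightarrow> bool" where
  "haar_stiefel_perp M n k X \<longleftrightarrow>
     X \<in> measurable M (mat_space n k) \<and>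
     (AE \<omega> in M. X \<omega> \<in> stiefel_perp n k) \<and>
     (\<forall>U\<in>orth_fix_xi n. distr M (mat_space n k) (\<lambda>\<omega>. lmul n k U (X \<omega>)) = distr M (mat_space n k) X)"

definition Lmat :: "nat \<Rightarrow> nat \<Rightarrow> nat \<Rightarrow> real" where
  "Lmat m i j =
     (if i = j \<and> i < m then sqrt ((real m - real i) / (real m - real i + 1))
      else if 1 \<le> j \<and> j < i \<and> i \<le> m then - 1 / sqrt ((real m - real j + 1) * (real m - real j))
      else 0)"

definition Qmat :: "nat \<Rightarrow> nat \<Rightarrow> (nat \<times> nat \<Rightarrow> real) \<Rightarrow> nat \<Rightarrow> nat \<Rightarrow> real" where
  "Qmat m n Qh r k = (if r < m then Qh (k, r) else 1 / sqrt (real n))"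

definition Wmat :: "nat \<Rightarrow> nat \<Rightarrow> (nat \<times> nat \<Rightarrow> real) \<Rightarrow> nat \<Rightarrow> nat \<Rightarrow> real" where
  "Wmat m n Qh i k = (\<Sum>r=1..m. Lmat m i r * Qmat m n Qh r k) + 1 / sqrt (real m * real n)"

end

theory Submission
  imports Defs "HOL-Probability.Hoeffding"
begin

lemma cis_sum:
  fixes n :: nat and d :: int
  assumes "n > 0"
  shows "(\<Sum>k=1..n. cis (2 * pi * real_of_int d * real k / real n)) = (if int n dvd d then of_nat n else 0)"
proof -
  define w where "w = cis (2 * pi * real_of_int d / real n)"
  have pw: "cis (2 * pi * real_of_int d * real k / real n) = w ^ k" for k
  proof -
    have "w ^ k = cis (real k * (2 * pi * real_of_int d / real n))" by (simp only: w_def Complex.DeMoivre)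
    also have "real k * (2 * pi * real_of_int d / real n) = 2 * pi * real_of_int d * real k / real n" by simp
    finally show ?thesis by simp
  qed
  have S: "(\<Sum>k=1..n. cis (2 * pi * real_of_int d * real k / real n)) = (\<Sum>k<n. w ^ Suc k)"
    unfolding pw using sum.atLeast1_atMost_eq[of "\<lambda>k. w ^ k" n] by simp
  show ?thesis
  proof (cases "int n dvd d")
    case True
    then obtain q where q: "d = int n * q" by blast
    have "w = cis (2 * pi * real_of_int q)" using assms by (simp add: w_def q field_simps)
    also have "\<dots> = 1" using cos_int_2pin[of q] sin_int_2pin[of q] by (simp add: complex_eq_iff)
    finally show ?thesis using S True by simp
  next
    case False
    have w1: "w \<noteq> 1"
    proof
      assume "w = 1"
      then have "cos (2 * pi * real_of_int d / real n) = 1" by (simp add: w_def complex_eq_iff)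
      then obtain j :: int where "2 * pi * real_of_int d / real n = real_of_int j * 2 * pi"
        using cos_one_2pi_int by blast
      then have "real_of_int d = real_of_int (j * int n)" using assms by (simp add: field_simps)
      then have "d = j * int n" using of_int_eq_iff by blast
      then show False using False by simp
    qed
    have wn: "w ^ n = 1"
    proof -
      have "w ^ n = cis (real n * (2 * pi * real_of_int d / real n))" by (simp only: w_def Complex.DeMoivre)
      also have "\<dots> = cis (2 * pi * real_of_int d)" using assms by simp
      also have "\<dots> = 1" using cos_int_2pin[of d] sin_int_2pin[of d] by (simp add: complex_eq_iff)
      finally show ?thesis .
    qed
    have "(\<Sum>k<n. w ^ Suc k) = w * (\<Sum>k<n. w ^ k)" by (simp add: sum_distrib_left)
    also have "\<dots> = 0" using w1 wn by (simp add: geometric_sum)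
    finally show ?thesis using S False by simp
  qed
qed

lemma cos_sum:
  fixes n :: nat and d :: int
  assumes "n > 0"
  shows "(\<Sum>k=1..n. cos (2 * pi * real_of_int d * real k / real n)) = (if int n dvd d then real n else 0)"
proof -
  have e: "(\<Sum>k=1..n. cos (2 * pi * real_of_int d * real k / real n)) = Re (\<Sum>k=1..n. cis (2 * pi * real_of_int d * real k / real n))"
    by (simp add: Re_sum)
  show ?thesis unfolding e cis_sum[OF assms, of d] by simp
qed

lemma sin_sum:
  fixes n :: nat and d :: int
  assumes "n > 0"
  shows "(\<Sum>k=1..n. sin (2 * pi * real_of_int d * real k / real n)) = 0"
proof -
  have e: "(\<Sum>k=1..n. sin (2 * pi * real_of_int d * real k / real n)) = Im (\<Sum>k=1..n. cis (2 * pi * real_of_int d * real k / real n))"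
    by (simp add: Im_sum)
  show ?thesis unfolding e cis_sum[OF assms, of d] by simp
qed

lemma cosh_bound_nonneg:
  fixes x :: real assumes x: "x \<ge> 0"
  shows "exp x + exp (-x) \<le> 2 * exp (x^2 / 2)"
proof -
  have "-(2*x) * (1/2) + ln (1 + (1/2) * (exp (2*x) - 1)) \<le> (2*x)^2 / 8"
    using Hoeffdings_lemma_aux[of "2*x" "1/2"] x by simp
  then have "ln ((1 + exp (2*x)) / 2) \<le> x + x^2 / 2"
    by (simp add: power2_eq_square algebra_simps add_divide_distrib)
  moreover have "(1 + exp (2*x)) / 2 = exp (ln ((1 + exp (2*x)) / 2))"
    by (simp add: add_pos_pos)
  ultimately have "(1 + exp (2*x)) / 2 \<le> exp (x + x^2/2)"
    by (metis exp_le_cancel_iff)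
  then have "(1 + exp (2*x)) * exp (-x) \<le> 2 * exp (x + x^2/2) * exp (-x)"
    by simp
  moreover have "(1 + exp (2*x)) * exp (-x) = exp x + exp (-x)"
    by (simp add: algebra_simps flip: exp_add)
  moreover have "2 * exp (x + x^2/2) * exp (-x) = 2 * exp (x^2/2)"
    by (simp add: mult.assoc flip: exp_add)
  ultimately show ?thesis by simp
qed

lemma cosh_bound:
  fixes x :: real
  shows "exp x + exp (-x) \<le> 2 * exp (x^2 / 2)"
proof (cases "x \<ge> 0")
  case True then show ?thesis by (rule cosh_bound_nonneg)
next
  case False
  then have "exp (-x) + exp (-(-x)) \<le> 2 * exp ((-x)^2 / 2)" by (intro cosh_bound_nonneg) simp
  then show ?thesis by simp
qed

definition sg :: "nat set \<Rightarrow> nat \<Rightarrow> real" where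
  "sg S j = (if j \<in> S then -1 else 1)"

lemma rad_mgf:
  fixes c :: "nat \<Rightarrow> real"
  assumes "finite A"
  shows "(\<Sum>S\<in>Pow A. exp (l * (\<Sum>j\<in>A. sg S j * c j))) = (\<Prod>j\<in>A. exp (l * c j) + exp (-(l * c j)))"
  using assms
proof (induction A rule: finite_induct)
  case empty
  then show ?case by simp
next
  case (insert a A)
  have disj: "Pow A \<inter> insert a ` Pow A = {}" using insert.hyps by auto
  have inj: "inj_on (insert a) (Pow A)"
  proof (rule inj_onI)
    fix x y assume "x \<in> Pow A" "y \<in> Pow A" "insert a x = insert a y"
    moreover have "a \<notin> x" "a \<notin> y" using insert.hyps \<open>x \<in> Pow A\<close> \<open>y \<in> Pow A\<close> by auto
    ultimately show "x = y" using insert_ident by metis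
  qed
  have e1: "(\<Sum>j\<in>insert a A. sg S j * c j) = c a + (\<Sum>j\<in>A. sg S j * c j)" if "S \<in> Pow A" for S
    using that insert.hyps by (auto simp: sg_def)
  have e2: "(\<Sum>j\<in>insert a A. sg (insert a S) j * c j) = - c a + (\<Sum>j\<in>A. sg S j * c j)" if "S \<in> Pow A" for S
  proof -
    have "(\<Sum>j\<in>A. sg (insert a S) j * c j) = (\<Sum>j\<in>A. sg S j * c j)"
      using insert.hyps by (intro sum.cong refl) (auto simp: sg_def)
    then show ?thesis using insert.hyps by (simp add: sg_def)
  qed
  have "(\<Sum>S\<in>Pow (insert a A). exp (l * (\<Sum>j\<in>insert a A. sg S j * c j)))
      = (\<Sum>S\<in>Pow A. exp (l * (\<Sum>j\<in>insert a A. sg S j * c j)))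
        + (\<Sum>S\<in>Pow A. exp (l * (\<Sum>j\<in>insert a A. sg (insert a S) j * c j)))"
    unfolding Pow_insert using disj inj insert.hyps
    by (simp add: sum.union_disjoint sum.reindex)
  also have "\<dots> = (\<Sum>S\<in>Pow A. exp (l * c a) * exp (l * (\<Sum>j\<in>A. sg S j * c j)))
        + (\<Sum>S\<in>Pow A. exp (-(l * c a)) * exp (l * (\<Sum>j\<in>A. sg S j * c j)))"
    by (intro arg_cong2[where f="(+)"] sum.cong refl)
       (simp_all add: e1 e2 distrib_left right_diff_distrib flip: exp_add)
  also have "\<dots> = (exp (l * c a) + exp (-(l * c a))) * (\<Sum>S\<in>Pow A. exp (l * (\<Sum>j\<in>A. sg S j * c j)))"
    by (simp only: distrib_right sum_distrib_left sum.distrib)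
  also have "\<dots> = (\<Prod>j\<in>insert a A. exp (l * c j) + exp (-(l * c j)))"
    using insert by simp
  finally show ?case .
qed

lemma rad_tail_one:
  fixes c :: "nat \<Rightarrow> real"
  assumes A: "finite A" and s2: "(\<Sum>j\<in>A. (c j)^2) \<le> s" and s: "s > 0" and t: "t \<ge> 0"
  shows "real (card {S\<in>Pow A. t \<le> (\<Sum>j\<in>A. sg S j * c j)}) \<le> 2 ^ card A * exp (-(t^2) / (2 * s))"
proof -
  define l where "l = t / s"
  have l0: "l \<ge> 0" using t s by (simp add: l_def)
  define F where "F S = (\<Sum>j\<in>A. sg S j * c j)" for S
  let ?B = "{S\<in>Pow A. t \<le> F S}"
  have fin: "finite (Pow A)" using A by simp
  have "real (card ?B) * exp (l * t) = (\<Sum>S\<in>?B. exp (l * t))" by simp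
  also have "\<dots> \<le> (\<Sum>S\<in>?B. exp (l * F S))"
    by (intro sum_mono) (simp add: mult_left_mono l0)
  also have "\<dots> \<le> (\<Sum>S\<in>Pow A. exp (l * F S))"
    by (intro sum_mono2 fin) auto
  also have "\<dots> = (\<Prod>j\<in>A. exp (l * c j) + exp (-(l * c j)))"
    unfolding F_def by (rule rad_mgf[OF A])
  also have "\<dots> \<le> (\<Prod>j\<in>A. 2 * exp ((l * c j)^2 / 2))"
    by (intro prod_mono) (auto intro: cosh_bound add_nonneg_nonneg)
  also have "\<dots> = 2 ^ card A * (\<Prod>j\<in>A. exp (l^2 / 2 * (c j)^2))"
    by (simp add: prod.distrib power_mult_distrib mult_ac)
  also have "\<dots> = 2 ^ card A * exp (l^2 / 2 * (\<Sum>j\<in>A. (c j)^2))"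
    by (simp add: exp_sum A sum_distrib_left)
  also have "\<dots> \<le> 2 ^ card A * exp (l^2 / 2 * s)"
    using s2 by (simp add: mult_left_mono)
  finally have "real (card ?B) * exp (l * t) \<le> 2 ^ card A * exp (l^2 / 2 * s)" .
  then have "real (card ?B) * exp (l * t) * exp (-(l * t)) \<le> 2 ^ card A * exp (l^2 / 2 * s) * exp (-(l * t))"
    by (rule mult_right_mono) simp
  then have "real (card ?B) \<le> 2 ^ card A * (exp (l^2 / 2 * s) * exp (-(l * t)))"
    by (simp add: mult.assoc flip: exp_add)
  also have "exp (l^2 / 2 * s) * exp (-(l * t)) = exp (-(t^2) / (2 * s))"
  proof -
    have "l^2 / 2 * s + -(l * t) = -(t^2) / (2 * s)"
      using s by (simp add: l_def power2_eq_square field_simps)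
    then show ?thesis by (simp flip: exp_add)
  qed
  finally show ?thesis unfolding F_def .
qed

lemma rad_tail:
  fixes c :: "nat \<Rightarrow> real"
  assumes A: "finite A" and s2: "(\<Sum>j\<in>A. (c j)^2) \<le> s" and s: "s > 0" and t: "t \<ge> 0"
  shows "real (card {S\<in>Pow A. t \<le> \<bar>\<Sum>j\<in>A. sg S j * c j\<bar>}) \<le> 2 * 2 ^ card A * exp (-(t^2) / (2 * s))"
proof -
  let ?P = "{S\<in>Pow A. t \<le> (\<Sum>j\<in>A. sg S j * c j)}"
  let ?N = "{S\<in>Pow A. t \<le> (\<Sum>j\<in>A. sg S j * - c j)}"
  let ?Q = "{S\<in>Pow A. t \<le> \<bar>\<Sum>j\<in>A. sg S j * c j\<bar>}"
  have s2': "(\<Sum>j\<in>A. (- c j)^2) \<le> s" using s2 by simp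
  have sub: "?Q \<subseteq> ?P \<union> ?N"
  proof
    fix S assume S: "S \<in> ?Q"
    define F where "F = (\<Sum>j\<in>A. sg S j * c j)"
    have neg: "(\<Sum>j\<in>A. sg S j * - c j) = - F" unfolding F_def by (simp add: sum_negf)
    have SA: "S \<subseteq> A" and tF: "t \<le> \<bar>F\<bar>" using S unfolding F_def by auto
    show "S \<in> ?P \<union> ?N"
    proof (cases "t \<le> F")
      case True then have "t \<le> (\<Sum>j\<in>A. sg S j * c j)" unfolding F_def .
      then show ?thesis using SA by blast
    next
      case False then have "t \<le> - F" using tF by arith
      then have "t \<le> (\<Sum>j\<in>A. sg S j * - c j)" unfolding neg .
      then show ?thesis using SA by blast
    qed
  qed
  have subP: "?P \<union> ?N \<subseteq> Pow A" by blast
  have fin: "finite (?P \<union> ?N)" by (rule finite_subset[OF subP]) (simp add: A)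
  have c1: "card ?Q \<le> card (?P \<union> ?N)" by (rule card_mono[OF fin sub])
  have c2: "card (?P \<union> ?N) \<le> card ?P + card ?N" by (rule card_Un_le)
  have "real (card ?Q) \<le> real (card ?P) + real (card ?N)"
    using c1 c2 by linarith
  also have "\<dots> \<le> 2 ^ card A * exp (-(t^2) / (2 * s)) + 2 ^ card A * exp (-(t^2) / (2 * s))"
    by (intro add_mono rad_tail_one[OF A s2 s t] rad_tail_one[OF A s2' s t])
  finally show ?thesis by simp
qed

definition hh :: "nat \<Rightarrow> nat \<Rightarrow> nat \<Rightarrow> real" where
  "hh n j k = (cos (2 * pi * real j * real k / real n) + sin (2 * pi * real j * real k / real n)) / sqrt (real n)"

lemma hh_sym: "hh n j k = hh n k j"
  unfolding hh_def by (simp add: mult_ac)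

lemma hh_orth:
  assumes n: "n > 0" and j: "j \<in> {1..n}" and l: "l \<in> {1..n}"
  shows "(\<Sum>k=1..n. hh n j k * hh n l k) = (if j = l then 1 else 0)"
proof -
  have e: "hh n j k * hh n l k = (cos (2 * pi * real_of_int (int j - int l) * real k / real n)
      + sin (2 * pi * real_of_int (int (j + l)) * real k / real n)) / real n" for k
  proof -
    define a where "a = 2 * pi * real j * real k / real n"
    define b where "b = 2 * pi * real l * real k / real n"
    have 1: "2 * pi * real_of_int (int j - int l) * real k / real n = a - b"
      by (simp add: a_def b_def) (simp add: algebra_simps diff_divide_distrib)
    have 2: "2 * pi * real_of_int (int (j + l)) * real k / real n = a + b"
      by (simp add: a_def b_def) (simp add: algebra_simps add_divide_distrib)
    have "hh n j k * hh n l k = (cos a + sin a) * (cos b + sin b) / real n"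
      using n by (simp add: hh_def a_def b_def)
    also have "\<dots> = (cos (a - b) + sin (a + b)) / real n"
      by (simp add: cos_diff sin_add algebra_simps)
    finally show ?thesis unfolding 1 2 .
  qed
  have "(\<Sum>k=1..n. hh n j k * hh n l k) = ((\<Sum>k=1..n. cos (2 * pi * real_of_int (int j - int l) * real k / real n))
      + (\<Sum>k=1..n. sin (2 * pi * real_of_int (int (j + l)) * real k / real n))) / real n"
    unfolding e by (simp only: sum_divide_distrib[symmetric] sum.distrib)
  also have "\<dots> = (if int n dvd (int j - int l) then 1 else 0)"
    using n by (simp only: cos_sum[OF n] sin_sum[OF n]) simp
  also have "(int n dvd (int j - int l)) = (j = l)"
  proof
    assume "int n dvd (int j - int l)"
    then obtain q where q: "int j - int l = int n * q" by blast
    have "\<bar>int j - int l\<bar> < int n" using j l by auto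
    then have "\<bar>int n * q\<bar> < int n" using q by simp
    then have "int n * \<bar>q\<bar> < int n * 1" by (simp add: abs_mult)
    then have "\<bar>q\<bar> < 1" using n by (simp only: mult_less_cancel_left_pos of_nat_0_less_iff)
    then have "q = 0" by simp
    then show "j = l" using q by simp
  qed simp
  finally show ?thesis .
qed

lemma hh_sq_le: "(hh n j k)^2 \<le> 2 / real n"
proof -
  define a where "a = 2 * pi * real j * real k / real n"
  have "(cos a + sin a)^2 \<le> 2"
  proof -
    have "(cos a + sin a)^2 + (cos a - sin a)^2 = 2"
      by (simp add: power2_eq_square algebra_simps)
    then show ?thesis by (smt (verit) zero_le_power2)
  qed
  then show ?thesis unfolding hh_def a_def[symmetric]
    by (simp add: power_divide divide_right_mono)
qed

lemma hh_last: "n > 0 \<Longrightarrow> hh n n k = 1 / sqrt (real n)"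
proof -
  assume n: "n > 0"
  have "2 * pi * real n * real k / real n = 2 * pi * real_of_int (int k)" using n by simp
  then show ?thesis unfolding hh_def using cos_int_2pin[of "int k"] sin_int_2pin[of "int k"]
    by simp
qed


definition Dm :: "nat \<Rightarrow> nat set \<Rightarrow> nat \<times> nat \<Rightarrow> real" where
  "Dm n S = (\<lambda>(k, l). \<Sum>j=1..n. sg S j * hh n j k * hh n j l)"

lemma hh_rowsum:
  assumes n: "n > 0" and j: "j \<in> {1..n}"
  shows "(\<Sum>l=1..n. hh n j l) = (if j = n then sqrt (real n) else 0)"
proof -
  have "(\<Sum>l=1..n. hh n j l) = sqrt (real n) * (\<Sum>l=1..n. hh n j l * hh n n l)"
    using n by (simp add: hh_last sum_distrib_left)
  also have "\<dots> = (if j = n then sqrt (real n) else 0)"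
    using hh_orth[OF n j, of n] n by simp
  finally show ?thesis .
qed

lemma Dm_in:
  assumes n: "n > 0" and S: "S \<subseteq> {1..n-1}"
  shows "Dm n S \<in> orth_fix_xi n"
proof -
  have nS: "n \<notin> S" using S n by auto
  have sg2: "sg S j * sg S j = 1" for j by (simp add: sg_def)
  have orth: "(\<Sum>k=1..n. Dm n S (k, i) * Dm n S (k, j)) = (if i = j then 1 else 0)"
    if i: "i \<in> {1..n}" and j: "j \<in> {1..n}" for i j
  proof -
    have "(\<Sum>k=1..n. Dm n S (k, i) * Dm n S (k, j))
        = (\<Sum>k=1..n. \<Sum>a=1..n. \<Sum>b=1..n. (sg S a * hh n a i * sg S b * hh n b j) * (hh n a k * hh n b k))"
      unfolding Dm_def by (simp add: sum_product mult_ac)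
    also have "\<dots> = (\<Sum>a=1..n. \<Sum>b=1..n. \<Sum>k=1..n. (sg S a * hh n a i * sg S b * hh n b j) * (hh n a k * hh n b k))"
      by (subst sum.swap, rule sum.cong[OF refl], subst sum.swap, rule refl)
    also have "\<dots> = (\<Sum>a=1..n. \<Sum>b=1..n. (sg S a * hh n a i * sg S b * hh n b j) * (\<Sum>k=1..n. hh n a k * hh n b k))"
      by (simp add: sum_distrib_left)
    also have "\<dots> = (\<Sum>a=1..n. \<Sum>b=1..n. (sg S a * hh n a i * sg S b * hh n b j) * (if a = b then 1 else 0))"
      by (intro sum.cong refl, subst hh_orth[OF n], auto)
    also have "\<dots> = (\<Sum>a=1..n. hh n a i * hh n a j)"
    proof (rule sum.cong[OF refl])
      fix a assume a: "a \<in> {1..n}"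
      have "(\<Sum>b=1..n. (sg S a * hh n a i * sg S b * hh n b j) * (if a = b then 1 else 0))
          = (\<Sum>b=1..n. if a = b then sg S a * hh n a i * sg S b * hh n b j else 0)"
        by (rule sum.cong) auto
      also have "\<dots> = sg S a * hh n a i * sg S a * hh n a j" using a by simp
      also have "\<dots> = hh n a i * hh n a j" using sg2[of a] by (simp add: algebra_simps)
      finally show "(\<Sum>b=1..n. (sg S a * hh n a i * sg S b * hh n b j) * (if a = b then 1 else 0)) = hh n a i * hh n a j" .
    qed
    also have "\<dots> = (\<Sum>a=1..n. hh n i a * hh n j a)" by (simp add: hh_sym)
    also have "\<dots> = (if i = j then 1 else 0)" using hh_orth[OF n i j] .
    finally show ?thesis .
  qed
  have fix1: "(\<Sum>l=1..n. Dm n S (i, l) * (1 / sqrt (real n))) = 1 / sqrt (real n)"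
    if i: "i \<in> {1..n}" for i
  proof -
    have "(\<Sum>l=1..n. Dm n S (i, l)) = (\<Sum>a=1..n. sg S a * hh n a i * (\<Sum>l=1..n. hh n a l))"
      unfolding Dm_def by (simp add: sum_distrib_left) (rule sum.swap)
    also have "\<dots> = (\<Sum>a=1..n. sg S a * hh n a i * (if a = n then sqrt (real n) else 0))"
      by (intro sum.cong refl, subst hh_rowsum[OF n], auto)
    also have "\<dots> = (\<Sum>a=1..n. if a = n then sg S a * hh n a i * sqrt (real n) else 0)"
      by (rule sum.cong) auto
    also have "\<dots> = sg S n * hh n n i * sqrt (real n)"
      using n by simp
    also have "\<dots> = 1" using nS n by (simp add: sg_def hh_last)
    finally show ?thesis by (simp add: sum_divide_distrib[symmetric])
  qed
  show ?thesis unfolding orth_fix_xi_def using orth fix1 by blast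
qed

definition vrow :: "nat \<Rightarrow> (nat \<times> nat \<Rightarrow> real) \<Rightarrow> nat \<Rightarrow> nat \<Rightarrow> real" where
  "vrow m Q i l = (\<Sum>r=1..m-1. Lmat m i r * Q (l, r))"

lemma W_eq:
  assumes m: "m \<ge> 1"
  shows "Wmat m n Q i k = vrow m Q i k + 1 / sqrt (real m * real n)"
proof -
  have Lm: "Lmat m i m = 0" by (simp add: Lmat_def)
  obtain m' where mS: "m = Suc m'" using m by (cases m) auto
  have "(\<Sum>r=1..m. Lmat m i r * Qmat m n Q r k) = (\<Sum>r=1..m-1. Lmat m i r * Qmat m n Q r k) + Lmat m i m * Qmat m n Q m k"
    unfolding mS by (simp add: sum.cl_ivl_Suc)
  also have "\<dots> = (\<Sum>r=1..m-1. Lmat m i r * Q (k, r))"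
    unfolding Lm by (simp, intro sum.cong refl, auto simp: Qmat_def)
  finally show ?thesis unfolding Wmat_def vrow_def by simp
qed

lemma telesc:
  assumes "Suc i \<le> m"
  shows "(\<Sum>r\<in>{1..<Suc i}. 1 / ((real m - real r + 1) * (real m - real r))) = 1 / (real m - real (Suc i) + 1) - 1 / real m"
  using assms
proof (induction i)
  case 0
  have "real m - real (Suc 0) + 1 = real m" by simp
  then show ?case by simp
next
  case (Suc i)
  have "{1..<Suc (Suc i)} = insert (Suc i) {1..<Suc i}" by auto
  then have "(\<Sum>r\<in>{1..<Suc (Suc i)}. 1 / ((real m - real r + 1) * (real m - real r)))
      = 1 / ((real m - real (Suc i) + 1) * (real m - real (Suc i))) + (\<Sum>r\<in>{1..<Suc i}. 1 / ((real m - real r + 1) * (real m - real r)))"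
    by simp
  also have "\<dots> = 1 / ((real m - real (Suc i) + 1) * (real m - real (Suc i))) + (1 / (real m - real (Suc i) + 1) - 1 / real m)"
    using Suc by simp
  also have "\<dots> = 1 / (real m - real (Suc (Suc i)) + 1) - 1 / real m"
  proof -
    define x where "x = real m - real (Suc i)"
    have x: "x > 0" using Suc.prems by (simp add: x_def)
    have e: "real m - real (Suc (Suc i)) + 1 = x" by (simp add: x_def)
    have e2: "real m - real (Suc i) + 1 = x + 1" by (simp add: x_def)
    have "1 / ((x + 1) * x) + 1 / (x + 1) = 1 / x"
    proof -
      have "x + 1 \<noteq> 0" using x by simp
      then show ?thesis using x by (simp add: divide_simps)
    qed
    then have "1 / ((x + 1) * x) + (1 / (x + 1) - 1 / real m) = 1 / x - 1 / real m" by simp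
    then show ?thesis unfolding e e2 x_def[symmetric] .
  qed
  finally show ?case .
qed

lemma row_norm:
  assumes m: "m \<ge> 2" and i: "i \<in> {1..m}"
  shows "(\<Sum>r=1..m-1. (Lmat m i r)^2) \<le> 1"
proof -
  define d where "d = (if i < m then (real m - real i) / (real m - real i + 1) else 0)"
  have sq: "(Lmat m i r)^2 = (if r = i then d else 0) + (if r < i then 1 / ((real m - real r + 1) * (real m - real r)) else 0)"
    if r: "r \<in> {1..m-1}" for r
  proof -
    consider "r = i" | "r < i" | "r > i" by arith
    then show ?thesis
    proof cases
      case 1 then show ?thesis using r i by (auto simp: Lmat_def d_def)
    next
      case 2
      have pos: "(real m - real r + 1) * (real m - real r) > 0" using r by auto
      then show ?thesis using 2 r i by (auto simp: Lmat_def power_divide real_sqrt_mult power_mult_distrib)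
    next
      case 3 then show ?thesis using r i by (auto simp: Lmat_def)
    qed
  qed
  have "(\<Sum>r=1..m-1. (Lmat m i r)^2) = (\<Sum>r=1..m-1. (if r = i then d else 0)) + (\<Sum>r=1..m-1. (if r < i then 1 / ((real m - real r + 1) * (real m - real r)) else 0))"
    by (simp add: sq sum.distrib)
  also have "(\<Sum>r=1..m-1. (if r = i then d else 0)) = d"
    using i by (auto simp: d_def)
  also have "(\<Sum>r=1..m-1. (if r < i then 1 / ((real m - real r + 1) * (real m - real r)) else 0))
      = (\<Sum>r\<in>{1..<i}. 1 / ((real m - real r + 1) * (real m - real r)))"
  proof -
    have "{r\<in>{1..m-1}. r < i} = {1..<i}" using i by auto
    then show ?thesis by (simp add: sum.inter_filter[symmetric])
  qed
  also have "\<dots> = 1 / (real m - real i + 1) - 1 / real m"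
  proof -
    obtain i' where iS: "i = Suc i'" using i by (cases i) auto
    show ?thesis unfolding iS by (rule telesc) (use i iS in simp)
  qed
  also have "d + (1 / (real m - real i + 1) - 1 / real m) \<le> 1"
  proof (cases "i < m")
    case True
    then have "real m - real i + 1 > 0" by simp
    then have "d + 1 / (real m - real i + 1) = 1" using True by (simp add: d_def field_simps)
    moreover have "1 / real m \<ge> 0" by simp
    ultimately show ?thesis by linarith
  next
    case False
    then have "i = m" using i by simp
    then show ?thesis using m by (simp add: d_def)
  qed
  finally show ?thesis .
qed

lemma vrow_sum0:
  assumes Q: "Q \<in> stiefel_perp n (m - 1)" and n: "n > 0"
  shows "(\<Sum>l=1..n. vrow m Q i l) = 0"
proof -
  have z: "(\<Sum>l=1..n. Q (l, r)) = 0" if r: "r \<in> {1..m-1}" for r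
  proof -
    have "(\<Sum>l=1..n. Q (l, r) / sqrt (real n)) = 0" using Q r unfolding stiefel_perp_def by blast
    then have "(\<Sum>l=1..n. Q (l, r)) / sqrt (real n) = 0" by (simp add: sum_divide_distrib)
    then show ?thesis using n by simp
  qed
  have "(\<Sum>l=1..n. vrow m Q i l) = (\<Sum>r=1..m-1. Lmat m i r * (\<Sum>l=1..n. Q (l, r)))"
    unfolding vrow_def by (simp add: sum_distrib_left) (rule sum.swap)
  also have "\<dots> = 0" by (intro sum.neutral ballI, subst z, auto)
  finally show ?thesis .
qed

lemma vrow_norm:
  assumes Q: "Q \<in> stiefel_perp n (m - 1)"
  shows "(\<Sum>l=1..n. (vrow m Q i l)^2) = (\<Sum>r=1..m-1. (Lmat m i r)^2)"
proof -
  have o: "(\<Sum>l=1..n. Q (l, r) * Q (l, r')) = (if r = r' then 1 else 0)"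
    if "r \<in> {1..m-1}" "r' \<in> {1..m-1}" for r r'
    using Q that unfolding stiefel_perp_def by blast
  have "(\<Sum>l=1..n. (vrow m Q i l)^2)
      = (\<Sum>l=1..n. \<Sum>r=1..m-1. \<Sum>r'=1..m-1. (Lmat m i r * Lmat m i r') * (Q (l, r) * Q (l, r')))"
    unfolding vrow_def power2_eq_square sum_product by (simp add: mult_ac)
  also have "\<dots> = (\<Sum>r=1..m-1. \<Sum>r'=1..m-1. \<Sum>l=1..n. (Lmat m i r * Lmat m i r') * (Q (l, r) * Q (l, r')))"
    by (subst sum.swap, rule sum.cong[OF refl], subst sum.swap, rule refl)
  also have "\<dots> = (\<Sum>r=1..m-1. \<Sum>r'=1..m-1. (Lmat m i r * Lmat m i r') * (\<Sum>l=1..n. Q (l, r) * Q (l, r')))"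
    by (simp add: sum_distrib_left)
  also have "\<dots> = (\<Sum>r=1..m-1. \<Sum>r'=1..m-1. (if r = r' then Lmat m i r * Lmat m i r' else 0))"
    by (intro sum.cong refl, subst o, auto)
  also have "\<dots> = (\<Sum>r=1..m-1. (Lmat m i r)^2)"
    by (intro sum.cong refl) (simp add: power2_eq_square)
  finally show ?thesis .
qed

lemma vrow_lmul:
  assumes k: "k \<in> {1..n}"
  shows "vrow m (lmul n (m - 1) U Q) i k = (\<Sum>l=1..n. U (k, l) * vrow m Q i l)"
proof -
  have "vrow m (lmul n (m - 1) U Q) i k = (\<Sum>r=1..m-1. Lmat m i r * (\<Sum>l=1..n. U (k, l) * Q (l, r)))"
    unfolding vrow_def lmul_def using k by (intro sum.cong refl) auto
  also have "\<dots> = (\<Sum>l=1..n. U (k, l) * vrow m Q i l)"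
    unfolding vrow_def by (simp add: sum_distrib_left mult_ac) (rule sum.swap)
  finally show ?thesis .
qed

lemma parseval:
  fixes v :: "nat \<Rightarrow> real"
  assumes n: "n > 0"
  shows "(\<Sum>j=1..n. (\<Sum>l=1..n. hh n j l * v l)^2) = (\<Sum>l=1..n. (v l)^2)"
proof -
  have "(\<Sum>j=1..n. (\<Sum>l=1..n. hh n j l * v l)^2)
      = (\<Sum>j=1..n. \<Sum>l=1..n. \<Sum>l'=1..n. (v l * v l') * (hh n l j * hh n l' j))"
    unfolding power2_eq_square sum_product by (simp add: mult_ac hh_sym)
  also have "\<dots> = (\<Sum>l=1..n. \<Sum>l'=1..n. \<Sum>j=1..n. (v l * v l') * (hh n l j * hh n l' j))"
    by (subst sum.swap, rule sum.cong[OF refl], subst sum.swap, rule refl)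
  also have "\<dots> = (\<Sum>l=1..n. \<Sum>l'=1..n. (v l * v l') * (\<Sum>j=1..n. hh n l j * hh n l' j))"
    by (simp add: sum_distrib_left)
  also have "\<dots> = (\<Sum>l=1..n. \<Sum>l'=1..n. (if l = l' then v l * v l' else 0))"
    by (intro sum.cong refl, subst hh_orth[OF n], auto)
  also have "\<dots> = (\<Sum>l=1..n. (v l)^2)"
    by (intro sum.cong refl) (simp add: power2_eq_square)
  finally show ?thesis .
qed

lemma D_apply:
  fixes v :: "nat \<Rightarrow> real"
  assumes n: "n > 0" and v0: "(\<Sum>l=1..n. v l) = 0"
  shows "(\<Sum>l=1..n. Dm n S (k, l) * v l) = (\<Sum>j\<in>{1..n-1}. sg S j * (hh n j k * (\<Sum>l=1..n. hh n j l * v l)))"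
proof -
  have "(\<Sum>l=1..n. Dm n S (k, l) * v l) = (\<Sum>j=1..n. sg S j * (hh n j k * (\<Sum>l=1..n. hh n j l * v l)))"
    unfolding Dm_def by (simp add: sum_distrib_left sum_distrib_right mult_ac) (rule sum.swap)
  also have "\<dots> = (\<Sum>j\<in>{1..n-1}. sg S j * (hh n j k * (\<Sum>l=1..n. hh n j l * v l)))
       + sg S n * (hh n n k * (\<Sum>l=1..n. hh n n l * v l))"
  proof -
    obtain n' where nS: "n = Suc n'" using n by (cases n) auto
    show ?thesis unfolding nS by (simp add: sum.cl_ivl_Suc)
  qed
  also have "(\<Sum>l=1..n. hh n n l * v l) = 0"
    using v0 n by (simp add: hh_last sum_divide_distrib[symmetric])
  finally show ?thesis by simp
qed

lemma pointwise:
  assumes n: "n > 0" and m: "m \<ge> 2" and Q: "Q \<in> stiefel_perp n (m - 1)"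
    and i: "i \<in> {1..m}" and k: "k \<in> {1..n}" and t: "t \<ge> 0"
  shows "real (card {S\<in>Pow {1..n-1}. t \<le> \<bar>vrow m (lmul n (m - 1) (Dm n S) Q) i k\<bar>})
     \<le> 2 * 2 ^ (n - 1) * exp (-(t^2) / (2 * (2 / real n)))"
proof -
  define v where "v l = vrow m Q i l" for l
  define a where "a j = (\<Sum>l=1..n. hh n j l * v l)" for j
  define c where "c j = hh n j k * a j" for j
  have v0: "(\<Sum>l=1..n. v l) = 0" unfolding v_def by (rule vrow_sum0[OF Q n])
  have eq: "vrow m (lmul n (m - 1) (Dm n S) Q) i k = (\<Sum>j\<in>{1..n-1}. sg S j * c j)" for S
    unfolding vrow_lmul[OF k] v_def[symmetric] D_apply[OF n v0] a_def c_def ..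
  have set_eq: "{S\<in>Pow {1..n-1}. t \<le> \<bar>vrow m (lmul n (m - 1) (Dm n S) Q) i k\<bar>}
      = {S\<in>Pow {1..n-1}. t \<le> \<bar>\<Sum>j\<in>{1..n-1}. sg S j * c j\<bar>}"
    unfolding eq ..
  have "(\<Sum>j\<in>{1..n-1}. (c j)^2) \<le> (\<Sum>j\<in>{1..n-1}. 2 / real n * (a j)^2)"
  proof (rule sum_mono)
    fix j
    have "(c j)^2 = (hh n j k)^2 * (a j)^2" by (simp add: c_def power_mult_distrib)
    also have "\<dots> \<le> 2 / real n * (a j)^2" by (intro mult_right_mono hh_sq_le) simp
    finally show "(c j)^2 \<le> 2 / real n * (a j)^2" .
  qed
  also have "\<dots> \<le> (\<Sum>j\<in>{1..n}. 2 / real n * (a j)^2)"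
    by (intro sum_mono2) auto
  also have "\<dots> = 2 / real n * (\<Sum>l=1..n. (v l)^2)"
    unfolding sum_distrib_left[symmetric] a_def parseval[OF n] ..
  also have "(\<Sum>l=1..n. (v l)^2) = (\<Sum>r=1..m-1. (Lmat m i r)^2)"
    unfolding v_def by (rule vrow_norm[OF Q])
  also have "2 / real n * \<dots> \<le> 2 / real n * 1"
    by (intro mult_left_mono row_norm[OF m i]) simp
  finally have s2: "(\<Sum>j\<in>{1..n-1}. (c j)^2) \<le> 2 / real n" by simp
  have "real (card {S\<in>Pow {1..n-1}. t \<le> \<bar>\<Sum>j\<in>{1..n-1}. sg S j * c j\<bar>})
      \<le> 2 * 2 ^ card {1..n-1} * exp (-(t^2) / (2 * (2 / real n)))"
    by (rule rad_tail[OF _ s2 _ t]) (use n in auto)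
  then show ?thesis unfolding set_eq by simp
qed

lemma meas_lmul: "lmul n k U \<in> measurable (mat_space n k) (mat_space n k)"
  unfolding lmul_def mat_space_def
proof (rule measurable_restrict)
  fix ij assume ij: "ij \<in> {1..n} \<times> {1..k}"
  obtain i j where ijs: "ij = (i, j)" by (cases ij)
  have "(\<lambda>Q. \<Sum>l=1..n. U (i, l) * Q (l, j)) \<in> borel_measurable (PiM ({1..n} \<times> {1..k}) (\<lambda>_. borel))"
  proof (intro borel_measurable_sum borel_measurable_times borel_measurable_const)
    fix l assume "l \<in> {1..n}"
    then have "(l, j) \<in> {1..n} \<times> {1..k}" using ij ijs by auto
    then show "(\<lambda>Q. Q (l, j)) \<in> borel_measurable (PiM ({1..n} \<times> {1..k}) (\<lambda>_. borel))"
      by (rule measurable_component_singleton)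
  qed
  then show "(\<lambda>Q. case ij of (i, j) \<Rightarrow> \<Sum>l=1..n. U (i, l) * Q (l, j)) \<in> borel_measurable (PiM ({1..n} \<times> {1..k}) (\<lambda>_. borel))"
    unfolding ijs by simp
qed

lemma meas_vrow:
  assumes k: "k \<in> {1..n}"
  shows "(\<lambda>Q. vrow m Q i k) \<in> borel_measurable (mat_space n (m - 1))"
  unfolding vrow_def mat_space_def
proof (intro borel_measurable_sum borel_measurable_times borel_measurable_const)
  fix r assume "r \<in> {1..m-1}"
  then have "(k, r) \<in> {1..n} \<times> {1..m-1}" using k by auto
  then show "(\<lambda>Q. Q (k, r)) \<in> borel_measurable (PiM ({1..n} \<times> {1..m-1}) (\<lambda>_. borel))"
    by (rule measurable_component_singleton)
qed

lemma entry_bound: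
  assumes P: "prob_space P" and H: "haar_stiefel_perp P n (m - 1) Y"
    and n: "n > 0" and m: "m \<ge> 2" and i: "i \<in> {1..m}" and k: "k \<in> {1..n}" and t: "t \<ge> 0"
  shows "measure P {\<omega>\<in>space P. t \<le> \<bar>vrow m (Y \<omega>) i k\<bar>} \<le> 2 * exp (-(t^2) / (2 * (2 / real n)))"
proof -
  interpret prob_space P by (rule P)
  define A where "A = {1..n-1}"
  define K where "K = mat_space n (m - 1)"
  define f where "f Q = vrow m Q i k" for Q
  define bnd where "bnd = 2 * 2 ^ (n - 1) * exp (-(t^2) / (2 * (2 / real n)))"
  have Ym: "Y \<in> measurable P K" using H unfolding haar_stiefel_perp_def K_def by blast
  have AEs: "AE \<omega> in P. Y \<omega> \<in> stiefel_perp n (m - 1)" using H unfolding haar_stiefel_perp_def by blast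
  have inv: "distr P K (\<lambda>\<omega>. lmul n (m - 1) U (Y \<omega>)) = distr P K Y" if "U \<in> orth_fix_xi n" for U
    using H that unfolding haar_stiefel_perp_def K_def by blast
  have fm: "f \<in> borel_measurable K" unfolding f_def K_def by (rule meas_vrow[OF k])
  define B where "B = {Q\<in>space K. t \<le> \<bar>f Q\<bar>}"
  have Bs: "B \<in> sets K" unfolding B_def using fm by measurable
  define E where "E S = {\<omega>\<in>space P. t \<le> \<bar>f (lmul n (m - 1) (Dm n S) (Y \<omega>))\<bar>}" for S
  define E0 where "E0 = {\<omega>\<in>space P. t \<le> \<bar>f (Y \<omega>)\<bar>}"
  have LYm: "(\<lambda>\<omega>. lmul n (m - 1) U (Y \<omega>)) \<in> measurable P K" for U
    using measurable_comp[OF Ym meas_lmul[of n "m - 1" U, folded K_def]] by (simp add: comp_def)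
  have Es: "E S \<in> sets P" for S
  proof -
    have "E S = (\<lambda>\<omega>. lmul n (m - 1) (Dm n S) (Y \<omega>)) -` B \<inter> space P"
      unfolding E_def B_def using measurable_space[OF LYm] by auto
    then show ?thesis using measurable_sets[OF LYm Bs] by simp
  qed
  have E0s: "E0 = Y -` B \<inter> space P"
    unfolding E0_def B_def using measurable_space[OF Ym] by auto
  have same: "measure P E0 = measure P (E S)" if S: "S \<in> Pow A" for S
  proof -
    have D: "Dm n S \<in> orth_fix_xi n" using S n unfolding A_def by (intro Dm_in) auto
    have "measure P E0 = measure (distr P K Y) B"
      unfolding E0s by (rule measure_distr[OF Ym Bs, symmetric])
    also have "\<dots> = measure (distr P K (\<lambda>\<omega>. lmul n (m - 1) (Dm n S) (Y \<omega>))) B"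
      using inv[OF D] by simp
    also have "\<dots> = measure P ((\<lambda>\<omega>. lmul n (m - 1) (Dm n S) (Y \<omega>)) -` B \<inter> space P)"
      by (rule measure_distr[OF LYm Bs])
    also have "(\<lambda>\<omega>. lmul n (m - 1) (Dm n S) (Y \<omega>)) -` B \<inter> space P = E S"
      unfolding E_def B_def using measurable_space[OF LYm] by auto
    finally show ?thesis .
  qed
  have finA: "finite (Pow A)" unfolding A_def by simp
  have cardA: "card (Pow A) = 2 ^ (n - 1)" unfolding A_def by (simp add: card_Pow)
  have ind_int: "integrable P (indicator (E S) :: 'a \<Rightarrow> real)" for S
    using Es[of S] by (intro integrable_real_indicator) (auto simp: emeasure_finite less_top[symmetric])
  have "real (2 ^ (n - 1)) * measure P E0 = (\<Sum>S\<in>Pow A. measure P E0)"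
    using cardA by simp
  also have "\<dots> = (\<Sum>S\<in>Pow A. measure P (E S))"
    by (intro sum.cong refl same)
  also have "\<dots> = (\<Sum>S\<in>Pow A. integral\<^sup>L P (indicator (E S)))"
    using Es by (intro sum.cong refl) (simp add: sets.Int_space_eq2)
  also have "\<dots> = integral\<^sup>L P (\<lambda>\<omega>. \<Sum>S\<in>Pow A. indicator (E S) \<omega>)"
    by (rule Bochner_Integration.integral_sum[symmetric]) (rule ind_int)
  also have "\<dots> \<le> integral\<^sup>L P (\<lambda>\<omega>. bnd)"
  proof (rule integral_mono_AE)
    show "integrable P (\<lambda>\<omega>. \<Sum>S\<in>Pow A. indicator (E S) \<omega> :: real)"
      using ind_int by (intro Bochner_Integration.integrable_sum) auto
    show "integrable P (\<lambda>\<omega>. bnd)" by simp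
    show "AE \<omega> in P. (\<Sum>S\<in>Pow A. indicator (E S) \<omega>) \<le> bnd"
      using AEs
    proof (rule AE_mp)
      show "AE \<omega> in P. Y \<omega> \<in> stiefel_perp n (m - 1) \<longrightarrow> (\<Sum>S\<in>Pow A. indicator (E S) \<omega>) \<le> bnd"
      proof (rule AE_I2, rule impI)
        fix \<omega> assume om: "\<omega> \<in> space P" and st: "Y \<omega> \<in> stiefel_perp n (m - 1)"
        have "(\<Sum>S\<in>Pow A. indicator (E S) \<omega> :: real) = (\<Sum>S\<in>Pow A. if \<omega> \<in> E S then 1 else 0)"
          by (intro sum.cong refl) (simp add: indicator_def)
        also have "\<dots> = real (card {S\<in>Pow A. \<omega> \<in> E S})"
          using finA by (simp add: sum.inter_filter[symmetric])
        also have "{S\<in>Pow A. \<omega> \<in> E S} = {S\<in>Pow {1..n-1}. t \<le> \<bar>vrow m (lmul n (m - 1) (Dm n S) (Y \<omega>)) i k\<bar>}"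
          unfolding E_def A_def f_def using om by auto
        also have "real (card \<dots>) \<le> bnd"
          unfolding bnd_def by (rule pointwise[OF n m st i k t])
        finally show "(\<Sum>S\<in>Pow A. indicator (E S) \<omega>) \<le> bnd" .
      qed
    qed
  qed
  also have "\<dots> = bnd" by (simp add: prob_space)
  finally have "real (2 ^ (n - 1)) * measure P E0 \<le> real (2 ^ (n - 1)) * (2 * exp (-(t^2) / (2 * (2 / real n))))"
    unfolding bnd_def by (simp add: mult_ac)
  then have "measure P E0 \<le> 2 * exp (-(t^2) / (2 * (2 / real n)))"
    by (rule mult_left_le_imp_le) simp
  then show ?thesis unfolding E0_def f_def .
qed

lemma step_bound:
  assumes P: "prob_space P" and H: "haar_stiefel_perp P n (m - 1) Y"
    and n: "n \<ge> 2" and m: "m \<ge> 2" and t: "t \<ge> 0"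
  shows "measure P {\<omega> \<in> space P.
            Max {\<bar>Wmat m n (Y \<omega>) i j\<bar> | i j. i \<in> {1..m} \<and> j \<in> {1..n}}
              \<ge> t + 1 / sqrt (real m * real n)}
     \<le> real m * real n * (2 * exp (-(t^2) / (2 * (2 / real n))))"
proof -
  interpret prob_space P by (rule P)
  define c where "c = 1 / sqrt (real m * real n)"
  have c0: "c \<ge> 0" unfolding c_def by simp
  define I where "I = {1..m} \<times> {1..n}"
  define E where "E ik = {\<omega>\<in>space P. t \<le> \<bar>vrow m (Y \<omega>) (fst ik) (snd ik)\<bar>}" for ik
  have Ym: "Y \<in> measurable P (mat_space n (m - 1))" using H unfolding haar_stiefel_perp_def by blast
  have Es: "E ik \<in> sets P" if "ik \<in> I" for ik
  proof -
    have k: "snd ik \<in> {1..n}" using that unfolding I_def by auto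
    have g: "(\<lambda>\<omega>. vrow m (Y \<omega>) (fst ik) (snd ik)) \<in> borel_measurable P"
      using measurable_comp[OF Ym meas_vrow[OF k, of m "fst ik"]] by (simp add: comp_def)
    show ?thesis unfolding E_def using g by measurable
  qed
  have sub: "{\<omega> \<in> space P.
            Max {\<bar>Wmat m n (Y \<omega>) i j\<bar> | i j. i \<in> {1..m} \<and> j \<in> {1..n}} \<ge> t + c}
       \<subseteq> (\<Union>ik\<in>I. E ik)"
  proof
    fix \<omega> assume om: "\<omega> \<in> {\<omega> \<in> space P.
            Max {\<bar>Wmat m n (Y \<omega>) i j\<bar> | i j. i \<in> {1..m} \<and> j \<in> {1..n}} \<ge> t + c}"
    let ?S = "{\<bar>Wmat m n (Y \<omega>) i j\<bar> | i j. i \<in> {1..m} \<and> j \<in> {1..n}}"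
    have fin: "finite ?S" by (rule finite_image_set2) auto
    have "\<bar>Wmat m n (Y \<omega>) 1 1\<bar> \<in> ?S" unfolding mem_Collect_eq
      using m n by (intro exI[of _ "1::nat"] conjI) auto
    then have ne: "?S \<noteq> {}" by (rule ex_in_conv[THEN iffD1, OF exI])
    have "t + c \<le> Max ?S" using om by simp
    then have "\<exists>x\<in>?S. t + c \<le> x" by (subst Max_ge_iff[OF fin ne, symmetric])
    then obtain x where x: "x \<in> ?S" "t + c \<le> x" by (rule bexE)
    from x(1) obtain i j where xe: "x = \<bar>Wmat m n (Y \<omega>) i j\<bar>" and ij: "i \<in> {1..m}" "j \<in> {1..n}"
      unfolding mem_Collect_eq by blast
    have le: "t + c \<le> \<bar>Wmat m n (Y \<omega>) i j\<bar>" using x(2) xe by simp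
    have "Wmat m n (Y \<omega>) i j = vrow m (Y \<omega>) i j + c" unfolding c_def using m by (intro W_eq) simp
    then have "t \<le> \<bar>vrow m (Y \<omega>) i j\<bar>" using le c0 by linarith
    then have "\<omega> \<in> E (i, j)" unfolding E_def using om by simp
    moreover have "(i, j) \<in> I" unfolding I_def using ij by simp
    ultimately show "\<omega> \<in> (\<Union>ik\<in>I. E ik)" by blast
  qed
  have finI: "finite I" unfolding I_def by simp
  have "measure P {\<omega> \<in> space P.
            Max {\<bar>Wmat m n (Y \<omega>) i j\<bar> | i j. i \<in> {1..m} \<and> j \<in> {1..n}} \<ge> t + c}
      \<le> measure P (\<Union>ik\<in>I. E ik)"
    by (rule finite_measure_mono[OF sub]) (use finI Es in auto)
  also have "\<dots> \<le> (\<Sum>ik\<in>I. measure P (E ik))"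
    by (rule measure_UNION_le[OF finI Es])
  also have "\<dots> \<le> (\<Sum>ik\<in>I. 2 * exp (-(t^2) / (2 * (2 / real n))))"
  proof (rule sum_mono)
    fix ik assume "ik \<in> I"
    then have "fst ik \<in> {1..m}" "snd ik \<in> {1..n}" unfolding I_def by auto
    then show "measure P (E ik) \<le> 2 * exp (-(t^2) / (2 * (2 / real n)))"
      unfolding E_def using n by (intro entry_bound[OF P H _ m _ _ t]) auto
  qed
  also have "\<dots> = real m * real n * (2 * exp (-(t^2) / (2 * (2 / real n))))"
    unfolding I_def by (simp add: card_cartesian_product)
  finally show ?thesis unfolding c_def .
qed

theorem theorem3:
  fixes m :: nat and C :: real
    and M :: "nat \<Rightarrow> 'a measure" and X :: "nat \<Rightarrow> 'a \<Rightarrow> nat \<times> nat \<Rightarrow> real"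
  assumes "m \<ge> 2" and "C > 2"
    and "\<And>n. n \<ge> m \<Longrightarrow> prob_space (M n)"
    and "\<And>n. n \<ge> m \<Longrightarrow> haar_stiefel_perp (M n) n (m - 1) (X n)"
  shows "(\<lambda>n. measure (M n) {\<omega> \<in> space (M n).
            Max {\<bar>Wmat m n (X n \<omega>) i j\<bar> | i j. i \<in> {1..m} \<and> j \<in> {1..n}}
              \<ge> C * sqrt (ln (real n) / real n) + 1 / sqrt (real m * real n)})
         \<longlonglongrightarrow> 0"
proof -
  define p where "p = 1 - C^2 / 4"
  have p: "p < 0"
  proof -
    have "C^2 > 2^2" using assms(2) by (intro power_strict_mono) auto
    then show ?thesis unfolding p_def by simp
  qed
  define b where "b n = 2 * real m * (real n powr p)" for n :: nat
  have blim: "b \<longlonglongrightarrow> 0"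
  proof -
    have "(\<lambda>n. real n powr p) \<longlonglongrightarrow> 0"
      by (rule tendsto_neg_powr[OF p filterlim_real_sequentially])
    then have "(\<lambda>n. 2 * real m * (real n powr p)) \<longlonglongrightarrow> 2 * real m * 0"
      by (intro tendsto_mult tendsto_const)
    then show ?thesis unfolding b_def by simp
  qed
  show ?thesis
  proof (rule tendsto_sandwich[OF _ _ tendsto_const blim])
    show "\<forall>\<^sub>F n in sequentially. 0 \<le> measure (M n) {\<omega> \<in> space (M n).
            Max {\<bar>Wmat m n (X n \<omega>) i j\<bar> | i j. i \<in> {1..m} \<and> j \<in> {1..n}}
              \<ge> C * sqrt (ln (real n) / real n) + 1 / sqrt (real m * real n)}"
      by simp
    show "\<forall>\<^sub>F n in sequentially. measure (M n) {\<omega> \<in> space (M n).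
            Max {\<bar>Wmat m n (X n \<omega>) i j\<bar> | i j. i \<in> {1..m} \<and> j \<in> {1..n}}
              \<ge> C * sqrt (ln (real n) / real n) + 1 / sqrt (real m * real n)} \<le> b n"
      unfolding eventually_sequentially
    proof (intro exI allI impI)
      fix n assume nm: "n \<ge> m"
      have n2: "n \<ge> 2" using nm assms(1) by simp
      define t where "t = C * sqrt (ln (real n) / real n)"
      have lnpos: "ln (real n) \<ge> 0" using n2 by simp
      have t0: "t \<ge> 0" unfolding t_def using assms(2) lnpos by simp
      have tsq: "t^2 = C^2 * (ln (real n) / real n)"
        unfolding t_def using lnpos by (simp add: power_mult_distrib)
      have ex: "-(t^2) / (2 * (2 / real n)) = -(C^2 / 4) * ln (real n)"
        unfolding tsq using n2 by (simp add: field_simps)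
      have "real m * real n * (2 * exp (-(t^2) / (2 * (2 / real n)))) = b n"
      proof -
        have e1: "real n = exp (ln (real n))" using n2 by simp
        have "real n * exp (-(C^2 / 4) * ln (real n)) = exp (ln (real n) + -(C^2 / 4) * ln (real n))"
          by (subst e1) (simp only: exp_add[symmetric])
        also have "ln (real n) + -(C^2 / 4) * ln (real n) = p * ln (real n)"
          by (simp add: p_def algebra_simps)
        also have "exp (p * ln (real n)) = real n powr p"
          using n2 by (simp add: powr_def)
        finally have "real n * exp (-(C^2 / 4) * ln (real n)) = real n powr p" .
        then show ?thesis unfolding ex b_def by (simp add: mult_ac)
      qed
      then show "measure (M n) {\<omega> \<in> space (M n).
            Max {\<bar>Wmat m n (X n \<omega>) i j\<bar> | i j. i \<in> {1..m} \<and> j \<in> {1..n}}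
              \<ge> C * sqrt (ln (real n) / real n) + 1 / sqrt (real m * real n)} \<le> b n"
        using step_bound[OF assms(3)[OF nm] assms(4)[OF nm] n2 assms(1) t0] unfolding t_def by simp
    qed
  qed
qed

end
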